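(* Let $M$ be the bounded distributive lattice of subsets of $\mathbb{N}$ that are either finite or equal to $\mathbb{N}$ (ordered by inclusion; this is a $\kappa$-frame for $\kappa=\aleph_0$). Then $M$ is d-reduced. Let $I=\{S\in M\mid 2\notin S\}$; then $I$ is an ideal of $M$, equal to the pseudocomplement $(\downarrow\{2\})^*$ in the lattice of ideals of $M$, and the quotient $M/\nabla_I$ has exactly three elements $[\emptyset]<[\{2\}]<[\mathbb{N}]$, so it is isomorphic to the three-element chain and is not d-reduced. Hence quotients of d-reduced $\kappa$-frames need not be d-reduced.
   Context: For $\kappa=\aleph_0$, $\kappa$-frames are bounded distributive lattices and $\kappa$-ideals are (nonempty) lattice ideals. A congruence is an equivalence relation that is a sublattice (preserving bounds) of $M\times M$. For an ideal $I$, $\nabla_I=\{(x,y)\mid x\vee i=y\vee i\text{ for some }i\in I\}$, the congruence generated by $\{(0,i)\mid i\in I\}$. A $\kappa$-frame $L$ is d-reduced if $\mathfrak{D}_L=\{(a,b)\mid\forall x\in L:\ a\wedge x=0\iff b\wedge x=0\}$ is the diagonal. The pseudocomplement $J^*$ of an ideal $J$ is the largest ideal $K$ with $K\cap J=\{0\}$. *)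

theory Defs
  imports Main
begin

text \<open>The lattice M of subsets of nat that are finite or all of nat, ordered by inclusion
  (meet = intersection, join = union, bottom = empty set, top = UNIV).\<close>
definition finCof :: "nat set set" where
  "finCof = {S. finite S \<or> S = UNIV}"

definition d_rel :: "'a set \<Rightarrow> ('a \<Rightarrow> 'a \<Rightarrow> 'a) \<Rightarrow> 'a \<Rightarrow> ('a \<times> 'a) set" where
  "d_rel L meet z = {(a,b). a \<in> L \<and> b \<in> L \<and> (\<forall>x\<in>L. meet a x = z \<longleftrightarrow> meet b x = z)}"

definition d_reduced :: "'a set \<Rightarrow> ('a \<Rightarrow> 'a \<Rightarrow> 'a) \<Rightarrow> 'a \<Rightarrow> bool" where
  "d_reduced L meet z \<longleftrightarrow> d_rel L meet z = Id_on L"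

definition lattice_ideal :: "'a set set \<Rightarrow> 'a set set \<Rightarrow> bool" where
  "lattice_ideal L I \<longleftrightarrow> I \<subseteq> L \<and> I \<noteq> {} \<and>
     (\<forall>a\<in>I. \<forall>b\<in>L. b \<subseteq> a \<longrightarrow> b \<in> I) \<and> (\<forall>a\<in>I. \<forall>b\<in>I. a \<union> b \<in> I)"

definition down :: "'a set set \<Rightarrow> 'a set \<Rightarrow> 'a set set" where
  "down L a = {b \<in> L. b \<subseteq> a}"

definition is_pseudocompl :: "'a set set \<Rightarrow> 'a set set \<Rightarrow> 'a set set \<Rightarrow> bool" where
  "is_pseudocompl L J K \<longleftrightarrow> lattice_ideal L K \<and> K \<inter> J = {{}} \<and>
     (\<forall>K'. lattice_ideal L K' \<and> K' \<inter> J = {{}} \<longrightarrow> K' \<subseteq> K)"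

definition nabla :: "'a set set \<Rightarrow> 'a set set \<Rightarrow> ('a set \<times> 'a set) set" where
  "nabla L I = {(x,y). x \<in> L \<and> y \<in> L \<and> (\<exists>i\<in>I. x \<union> i = y \<union> i)}"

definition qmeet :: "('a set \<times> 'a set) set \<Rightarrow> 'a set set \<Rightarrow> 'a set set \<Rightarrow> 'a set set" where
  "qmeet R A B = R `` {(SOME a. a \<in> A) \<inter> (SOME b. b \<in> B)}"

definition qbot :: "('a set \<times> 'a set) set \<Rightarrow> 'a set set" where
  "qbot R = R `` {{}}"

definition qle :: "('a set \<times> 'a set) set \<Rightarrow> 'a set set \<Rightarrow> 'a set set \<Rightarrow> bool" where
  "qle R A B \<longleftrightarrow> qmeet R A B = A"

end

theory Submission
  imports Defs
begin

abbreviation "I0 \<equiv> {S \<in> finCof. (2::nat) \<notin> S}"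
abbreviation "R0 \<equiv> nabla finCof I0"

lemma UNIV_fc[simp]: "UNIV \<in> finCof" by (simp add: finCof_def)
lemma fin_fc[simp]: "finite S \<Longrightarrow> S \<in> finCof" by (simp add: finCof_def)

lemma R_char: "(x,y) \<in> R0 \<longleftrightarrow> x \<in> finCof \<and> y \<in> finCof \<and> (x = UNIV \<longleftrightarrow> y = UNIV) \<and> (2 \<in> x \<longleftrightarrow> 2 \<in> y)"
proof
  assume h: "(x,y) \<in> R0"
  then obtain i where i: "i \<in> finCof" "2 \<notin> i" "x \<union> i = y \<union> i" and xy: "x \<in> finCof" "y \<in> finCof"
    unfolding nabla_def by auto
  have fi: "finite i" using i by (auto simp: finCof_def)
  have "x = UNIV \<longleftrightarrow> y = UNIV"
  proof
    assume "x = UNIV" then have "y \<union> i = UNIV" using i by auto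
    then have "\<not> finite y" using fi by (metis finite_UnI infinite_UNIV_nat)
    then show "y = UNIV" using xy by (auto simp: finCof_def)
  next
    assume "y = UNIV" then have "x \<union> i = UNIV" using i by auto
    then have "\<not> finite x" using fi by (metis finite_UnI infinite_UNIV_nat)
    then show "x = UNIV" using xy by (auto simp: finCof_def)
  qed
  moreover have "2 \<in> x \<longleftrightarrow> 2 \<in> y" using i by (metis Un_iff)
  ultimately show "x \<in> finCof \<and> y \<in> finCof \<and> (x = UNIV \<longleftrightarrow> y = UNIV) \<and> (2 \<in> x \<longleftrightarrow> 2 \<in> y)"
    using xy by auto
next
  assume h: "x \<in> finCof \<and> y \<in> finCof \<and> (x = UNIV \<longleftrightarrow> y = UNIV) \<and> (2 \<in> x \<longleftrightarrow> 2 \<in> y)"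
  show "(x,y) \<in> R0"
  proof (cases "x = UNIV")
    case True
    then show ?thesis using h unfolding nabla_def by (auto intro!: exI[of _ "{}"])
  next
    case False
    then have f: "finite x" "finite y" using h by (auto simp: finCof_def)
    have "x \<union> (x \<union> y - {2}) = y \<union> (x \<union> y - {2})" using h by auto
    moreover have "x \<union> y - {2} \<in> I0" using f by auto
    ultimately show ?thesis using h unfolding nabla_def by blast
  qed
qed

lemma cls: "x \<in> finCof \<Longrightarrow> R0 `` {x} = {y \<in> finCof. (y = UNIV \<longleftrightarrow> x = UNIV) \<and> (2 \<in> y \<longleftrightarrow> 2 \<in> x)}"
  unfolding Image_singleton using R_char[of x] by blast

lemma int_fc: "a \<in> finCof \<Longrightarrow> b \<in> finCof \<Longrightarrow> a \<inter> b \<in> finCof"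
  by (auto simp: finCof_def)

lemma qmeet_cls:
  assumes x: "x \<in> finCof" and y: "y \<in> finCof"
  shows "qmeet R0 (R0``{x}) (R0``{y}) = R0``{x \<inter> y}"
proof -
  note cx = cls[OF x] and cy = cls[OF y]
  have xx: "x \<in> R0``{x}" and yy: "y \<in> R0``{y}" unfolding cx cy using x y by blast+
  have a: "(SOME a. a \<in> R0``{x}) \<in> R0``{x}" by (rule someI, rule xx)
  have b: "(SOME b. b \<in> R0``{y}) \<in> R0``{y}" by (rule someI, rule yy)
  define a where "a = (SOME a. a \<in> R0``{x})"
  define b where "b = (SOME b. b \<in> R0``{y})"
  have ka: "a \<in> finCof" "(a = UNIV \<longleftrightarrow> x = UNIV)" "(2 \<in> a \<longleftrightarrow> 2 \<in> x)"
    using a[folded a_def] unfolding cx by blast+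
  have kb: "b \<in> finCof" "(b = UNIV \<longleftrightarrow> y = UNIV)" "(2 \<in> b \<longleftrightarrow> 2 \<in> y)"
    using b[folded b_def] unfolding cy by blast+
  have u: "a \<inter> b = UNIV \<longleftrightarrow> x \<inter> y = UNIV" using ka kb by (metis Int_UNIV)
  have t: "(2 \<in> a \<inter> b) = (2 \<in> x \<inter> y)" using ka kb by simp
  have "R0``{a \<inter> b} = R0``{x \<inter> y}"
    unfolding cls[OF int_fc[OF ka(1) kb(1)]] cls[OF int_fc[OF x y]] u t ..
  then show ?thesis unfolding qmeet_def a_def b_def by simp
qed

lemma ne2: "{2::nat} \<noteq> UNIV"
proof
  assume "{2::nat} = UNIV" then have "(0::nat) \<in> {2}" by simp
  then show False by simp
qed

lemma E0: "R0``{{}} = {y \<in> finCof. y \<noteq> UNIV \<and> 2 \<notin> y}" by (subst cls) auto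
lemma E2: "R0``{{2}} = {y \<in> finCof. y \<noteq> UNIV \<and> 2 \<in> y}" using ne2 by (subst cls) auto
lemma EU: "R0``{UNIV} = {UNIV}" by (subst cls) auto

lemma quot: "finCof // R0 = {R0 `` {{}}, R0 `` {{2}}, R0 `` {UNIV}}"
proof
  show "finCof // R0 \<subseteq> {R0 `` {{}}, R0 `` {{2}}, R0 `` {UNIV}}"
  proof
    fix C assume "C \<in> finCof // R0"
    then obtain x where x: "x \<in> finCof" and C: "C = R0``{x}" by (rule quotientE)
    show "C \<in> {R0 `` {{}}, R0 `` {{2}}, R0 `` {UNIV}}"
      unfolding C E0 E2 EU cls[OF x] by auto
  qed
next
  show "{R0 `` {{}}, R0 `` {{2}}, R0 `` {UNIV}} \<subseteq> finCof // R0"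
    by (simp add: quotientI)
qed

lemma m0: "{} \<in> R0 `` {{}}" "{} \<notin> R0 `` {{2}}" "{} \<notin> R0 `` {UNIV}" "{2} \<in> R0 `` {{2}}"
  "{2} \<notin> R0 `` {UNIV}"
  unfolding E0 E2 EU using ne2 by auto
lemma d1: "R0 `` {{}} \<noteq> R0 `` {{2}}" using m0 by metis
lemma d2: "R0 `` {{2}} \<noteq> R0 `` {UNIV}" using m0 by metis
lemma d3: "R0 `` {{}} \<noteq> R0 `` {UNIV}" using m0 by metis

lemma qm: 
  "qmeet R0 (R0``{{}}) (R0``{{}}) = R0``{{}}"
  "qmeet R0 (R0``{{}}) (R0``{{2}}) = R0``{{}}"
  "qmeet R0 (R0``{{}}) (R0``{UNIV}) = R0``{{}}"
  "qmeet R0 (R0``{{2}}) (R0``{{}}) = R0``{{}}"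
  "qmeet R0 (R0``{{2}}) (R0``{{2}}) = R0``{{2}}"
  "qmeet R0 (R0``{{2}}) (R0``{UNIV}) = R0``{{2}}"
  "qmeet R0 (R0``{UNIV}) (R0``{{}}) = R0``{{}}"
  "qmeet R0 (R0``{UNIV}) (R0``{{2}}) = R0``{{2}}"
  "qmeet R0 (R0``{UNIV}) (R0``{UNIV}) = R0``{UNIV}"
  by (simp_all add: qmeet_cls)

lemma dred: "d_reduced finCof (\<inter>) {}"
proof -
  have "a = b" if h: "(a,b) \<in> d_rel finCof (\<inter>) {}" for a b
  proof (rule ccontr)
    assume "a \<noteq> b"
    then obtain n where "n \<in> a \<and> n \<notin> b \<or> n \<in> b \<and> n \<notin> a" by blast
    moreover have "a \<inter> {n} = {} \<longleftrightarrow> b \<inter> {n} = {}" using h unfolding d_rel_def by auto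
    ultimately show False by auto
  qed
  then show ?thesis unfolding d_reduced_def d_rel_def Id_on_def by auto
qed

lemma ideal: "lattice_ideal finCof I0"
  unfolding lattice_ideal_def by (auto simp: finCof_def intro!: exI[of _ "{}"])

lemma pc: "is_pseudocompl finCof (down finCof {2}) I0"
proof -
  have dn: "down finCof {2} = {{}, {2}}" unfolding down_def by auto
  have "K' \<subseteq> I0" if "lattice_ideal finCof K'" "K' \<inter> {{}, {2}} = {{}}" for K'
  proof
    fix S assume S: "S \<in> K'"
    have "2 \<notin> S"
    proof
      assume "2 \<in> S"
      then have "{2} \<in> K'" using that(1) S unfolding lattice_ideal_def by auto
      then show False using that(2) by auto
    qed
    then show "S \<in> I0" using S that(1) unfolding lattice_ideal_def by auto
  qed
  then show ?thesis unfolding is_pseudocompl_def dn using ideal by (auto simp: finCof_def)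
qed

theorem mainTheorem15:
  fixes I :: "nat set set"
  defines "I \<equiv> {S \<in> finCof. (2::nat) \<notin> S}"
  defines "R \<equiv> nabla finCof I"
  shows "d_reduced finCof (\<inter>) {}
    \<and> lattice_ideal finCof I
    \<and> is_pseudocompl finCof (down finCof {2}) I
    \<and> finCof // R = {R `` {{}}, R `` {{2}}, R `` {UNIV}}
    \<and> R `` {{}} \<noteq> R `` {{2}} \<and> R `` {{2}} \<noteq> R `` {UNIV} \<and> R `` {{}} \<noteq> R `` {UNIV}
    \<and> qle R (R `` {{}}) (R `` {{2}}) \<and> qle R (R `` {{2}}) (R `` {UNIV})
    \<and> (\<exists>f. bij_betw f (finCof // R) {0::nat, 1, 2} \<and>
           (\<forall>A\<in>finCof // R. \<forall>B\<in>finCof // R. qle R A B \<longleftrightarrow> f A \<le> f B))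
    \<and> \<not> d_reduced (finCof // R) (qmeet R) (qbot R)"
proof -
  define e0 where "e0 = R0``{{}}"
  define e2 where "e2 = R0``{{2}}"
  define eu where "eu = R0``{UNIV}"
  note ds = d1[folded e0_def e2_def] d2[folded e2_def eu_def] d3[folded e0_def eu_def]
  note qms = qm[folded e0_def e2_def eu_def]
  define f where "f A = (if A = e0 then 0 else if A = e2 then 1 else (2::nat))" for A
  have fb: "bij_betw f {e0, e2, eu} {0::nat, 1, 2}"
    unfolding bij_betw_def inj_on_def f_def using ds by auto
  have ford: "\<forall>A\<in>{e0,e2,eu}. \<forall>B\<in>{e0,e2,eu}. qle R0 A B \<longleftrightarrow> f A \<le> f B"
    unfolding qle_def f_def using ds qms by auto
  have nd: "\<not> d_reduced {e0,e2,eu} (qmeet R0) (qbot R0)"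
  proof
    assume "d_reduced {e0,e2,eu} (qmeet R0) (qbot R0)"
    moreover have "(e2, eu) \<in> d_rel {e0,e2,eu} (qmeet R0) (qbot R0)"
      unfolding d_rel_def qbot_def e0_def[symmetric] using qms ds by auto
    ultimately show False unfolding d_reduced_def using ds by auto
  qed
  have q: "finCof // R0 = {e0, e2, eu}" using quot unfolding e0_def e2_def eu_def .
  have "qle R0 e0 e2" "qle R0 e2 eu" unfolding qle_def using qms by auto
  then show ?thesis
    unfolding R_def I_def e0_def[symmetric] e2_def[symmetric] eu_def[symmetric] q
    using dred ideal pc ds fb ford nd by blast
qed

end
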